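(* Let $\beta,\kappa>0$ and $V$ as in the context, and suppose there exist $\beta'\in(0,\beta)$ and $C_1>0$ with $V(x)\ge\kappa|x|^{-2-2\beta}-C_1|x|^{-2-\beta'}$ for all $0<|x|\le1$. Then for all $t>0$, $R\in\big(0,(\kappa/(4C_1))^{1/(2\beta-\beta')}\wedge1\big]$ and $x,y\in\mathbb{R}^d_0$ with $|x|\vee|y|<R$, $$\limsup_{\delta\to0}\frac{\mathbb{P}_x(X_t\in B(y,\delta),\,\tau_{B(0,R)}>t)}{|B(0,\delta)|}\le(4\pi t)^{-d/2}\exp\Big(-\frac{|x-y|^2}{4t}-\frac{3\kappa t}{4R^{2+2\beta}}\Big).$$ In particular, $\sup_{x\in B(0,R)\setminus\{0\}}\mathbb{P}_x(\tau_{B(0,R)}>t)\le\exp\big(-\frac{3\kappa t}{4R^{2+2\beta}}\big)$.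
   Context: $d\ge1$, $\mathbb{R}^d_0:=\mathbb{R}^d\setminus\{0\}$; $V$ is a non-negative locally bounded Borel function on $\mathbb{R}^d_0$ with $\sup_{|x|\ge1}V(x)<\infty$ and $\int_{B(0,1)\setminus\{0\}}V(x)dx=\infty$. $X$ is the process on $\mathbb{R}^d_0$ with semigroup $P_tf(x)=\mathbb{E}_x[e^{-\int_0^tV(W_s)ds}f(W_t);\,t<\tau^W_{\mathbb{R}^d_0}]$, $W$ Brownian motion with generator $\Delta$; $\tau_U:=\inf\{t>0:X_t\notin U\}$; $|A|$ is Lebesgue measure. *)

theory Defs
  imports "HOL-Probability.Probability"
begin

text \<open>Heat kernel of the Brownian motion with generator the Laplacian
  (covariance 2t times identity) on a Euclidean space of dimension DIM('a).\<close>
definition heat_kernel :: "real \<Rightarrow> 'a::euclidean_space \<Rightarrow> real" where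
  "heat_kernel t z = (4 * pi * t) powr (- real DIM('a) / 2) * exp (- (norm z)\<^sup>2 / (4 * t))"

definition brownian_motion :: "'w measure \<Rightarrow> (real \<Rightarrow> 'w \<Rightarrow> 'a::euclidean_space) \<Rightarrow> bool" where
  "brownian_motion M B \<longleftrightarrow>
     prob_space M \<and>
     (\<forall>t. B t \<in> borel_measurable M) \<and>
     (\<forall>\<omega>\<in>space M. B 0 \<omega> = 0) \<and>
     (\<forall>\<omega>\<in>space M. continuous_on {0..} (\<lambda>t. B t \<omega>)) \<and>
     (\<forall>s t. 0 \<le> s \<and> s < t \<longrightarrow>
        distributed M lborel (\<lambda>\<omega>. B t \<omega> - B s \<omega>) (\<lambda>z. ennreal (heat_kernel (t - s) z))) \<and>
     (\<forall>(ts :: nat \<Rightarrow> real) n. 0 \<le> ts 0 \<and> (\<forall>i<n. ts i < ts (Suc i)) \<longrightarrow>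
        prob_space.indep_vars M (\<lambda>_. borel) (\<lambda>i \<omega>. B (ts (Suc i)) \<omega> - B (ts i) \<omega>) {..<n})"

definition admissible_potential :: "('a::euclidean_space \<Rightarrow> real) \<Rightarrow> bool" where
  "admissible_potential V \<longleftrightarrow>
     (\<forall>x. x \<noteq> 0 \<longrightarrow> 0 \<le> V x) \<and>
     V \<in> borel_measurable borel \<and>
     (\<forall>K. compact K \<and> K \<subseteq> - {0} \<longrightarrow> bounded (V ` K)) \<and>
     bdd_above (V ` {x. 1 \<le> norm x}) \<and>
     (\<integral>\<^sup>+ x\<in>ball 0 1 - {0}. ennreal (V x) \<partial>lborel) = \<infinity>"

text \<open>killed_prob M B V t x A U = P_x(X_t \<in> A, \<tau>_U > t) for the process X
  obtained from the Brownian motion x + B, killed on hitting 0 and killed at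
  rate V (Feynman--Kac):
  E[ exp(- int_0^t V(x+B_s) ds) ; x+B_s \<in> U - {0} for all s \<in> [0,t], x + B_t \<in> A ].\<close>
definition killed_prob ::
  "'w measure \<Rightarrow> (real \<Rightarrow> 'w \<Rightarrow> 'a::euclidean_space) \<Rightarrow> ('a \<Rightarrow> real) \<Rightarrow> real \<Rightarrow> 'a \<Rightarrow> 'a set \<Rightarrow> 'a set \<Rightarrow> real" where
  "killed_prob M B V t x A U =
     (\<integral>\<omega>. (if (\<forall>s\<in>{0..t}. x + B s \<omega> \<in> U - {0}) \<and> x + B t \<omega> \<in> A
            then exp (- (\<integral>s\<in>{0..t}. V (x + B s \<omega>) \<partial>lborel)) else 0) \<partial>M)"

end

theory Submission
  imports Defs
begin

lemma V_lower:
  fixes V :: "'a::euclidean_space \<Rightarrow> real"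
  assumes \<beta>: "\<beta> > 0" and \<kappa>: "\<kappa> > 0"
    and \<beta>': "0 < \<beta>'" "\<beta>' < \<beta>" and C1: "C\<^sub>1 > 0"
    and Vlow: "\<And>x. 0 < norm x \<Longrightarrow> norm x \<le> 1 \<Longrightarrow>
                 V x \<ge> \<kappa> * norm x powr (-2 - 2 * \<beta>) - C\<^sub>1 * norm x powr (-2 - \<beta>')"
    and R: "0 < R" "R \<le> min ((\<kappa> / (4 * C\<^sub>1)) powr (1 / (2 * \<beta> - \<beta>'))) 1"
    and z: "0 < norm z" "norm z < R"
  shows "V z \<ge> 3 * \<kappa> / (4 * R powr (2 + 2 * \<beta>))"
proof -
  let ?r = "norm z"
  have r1: "?r \<le> 1" using z R by auto
  have e: "2 * \<beta> - \<beta>' > 0" using \<beta>' by auto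
  have "?r powr (2 * \<beta> - \<beta>') \<le> R powr (2 * \<beta> - \<beta>')"
    using z e by (intro powr_mono2) auto
  also have "\<dots> \<le> ((\<kappa> / (4 * C\<^sub>1)) powr (1 / (2 * \<beta> - \<beta>'))) powr (2 * \<beta> - \<beta>')"
    using R e by (intro powr_mono2) auto
  also have "\<dots> = \<kappa> / (4 * C\<^sub>1)"
    using e \<kappa> C1 by (simp add: powr_powr)
  finally have h: "?r powr (2 * \<beta> - \<beta>') \<le> \<kappa> / (4 * C\<^sub>1)" .
  have split: "?r powr (-2 - \<beta>') = ?r powr (-2 - 2*\<beta>) * ?r powr (2 * \<beta> - \<beta>')"
    using z by (simp add: powr_add[symmetric])
  have p0: "?r powr (-2 - 2*\<beta>) > 0" using z by simp
  have "C\<^sub>1 * ?r powr (-2 - \<beta>') \<le> ?r powr (-2 - 2*\<beta>) * (\<kappa> / 4)"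
  proof -
    have "C\<^sub>1 * ?r powr (2 * \<beta> - \<beta>') \<le> \<kappa> / 4" using h C1 by (simp add: field_simps)
    then show ?thesis unfolding split using p0
      by (metis mult.left_commute mult_le_cancel_left_pos)
  qed
  moreover have "3 * \<kappa> / 4 * ?r powr (-2 - 2*\<beta>) = \<kappa> * ?r powr (-2 - 2*\<beta>) - ?r powr (-2 - 2*\<beta>) * (\<kappa> / 4)"
    by (simp add: algebra_simps)
  ultimately have "V z \<ge> 3 * \<kappa> / 4 * ?r powr (-2 - 2*\<beta>)" using Vlow[of z] z r1 by linarith
  moreover have "?r powr (-2 - 2*\<beta>) \<ge> R powr (-2 - 2*\<beta>)"
    using z \<beta> by (intro powr_mono2') auto
  moreover have "R powr (-2 - 2*\<beta>) = 1 / R powr (2 + 2*\<beta>)"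
    using R by (simp add: powr_minus_divide[symmetric])
  ultimately have "V z \<ge> 3 * \<kappa> / 4 * (1 / R powr (2 + 2*\<beta>))"
    apply -
  proof -
    assume a: "3 * \<kappa> / 4 * ?r powr (-2 - 2*\<beta>) \<le> V z" "R powr (-2 - 2*\<beta>) \<le> ?r powr (-2 - 2*\<beta>)"
      "R powr (-2 - 2*\<beta>) = 1 / R powr (2 + 2*\<beta>)"
    have "3 * \<kappa> / 4 * R powr (-2 - 2*\<beta>) \<le> 3 * \<kappa> / 4 * ?r powr (-2 - 2*\<beta>)"
      using a(2) \<kappa> by (intro mult_left_mono) auto
    then show ?thesis using a by simp
  qed
  then show ?thesis by simp
qed

lemma path_integral_lower:
  fixes V :: "'a::euclidean_space \<Rightarrow> real" and q :: "real \<Rightarrow> 'a"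
  assumes V: "admissible_potential V"
    and q: "continuous_on {0..} q" and t: "t > 0"
    and inU: "\<forall>s\<in>{0..t}. q s \<in> U - {0}"
    and m: "\<And>z. z \<in> U - {0} \<Longrightarrow> m \<le> V z"
  shows "m * t \<le> (\<integral>s\<in>{0..t}. V (q s) \<partial>lborel)"
proof -
  define q' where "q' s = q (max 0 (min s t))" for s
  have cq': "continuous_on UNIV q'"
    unfolding q'_def
    by (rule continuous_on_compose2[OF q]) (auto intro!: continuous_intros)
  have Vm: "V \<in> borel_measurable borel" using V unfolding admissible_potential_def by auto
  have q'm: "q' \<in> borel_measurable borel" using cq' by (rule borel_measurable_continuous_onI)
  have hm: "(\<lambda>s. V (q' s)) \<in> borel_measurable borel"
    using measurable_compose[OF q'm Vm] by (simp add: comp_def)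
  have eq: "\<forall>s. s \<in> {0..t} \<longrightarrow> V (q s) = V (q' s)" unfolding q'_def by auto
  have K: "compact (q ` {0..t})"
    by (rule compact_continuous_image) (auto intro: continuous_on_subset[OF q])
  have "q ` {0..t} \<subseteq> - {0}" using inU by auto
  then have "bounded (V ` q ` {0..t})" using V K unfolding admissible_potential_def by blast
  then obtain b where b: "\<And>s. s \<in> {0..t} \<Longrightarrow> norm (V (q s)) \<le> b"
    unfolding bounded_iff by blast
  have int: "set_integrable lborel {0..t} (\<lambda>s. V (q' s))"
    unfolding set_integrable_def
  proof (rule integrableI_bounded_set[where A="{0..t}" and B=b])
    show "(\<lambda>x. indicator {0..t} x *\<^sub>R V (q' x)) \<in> borel_measurable lborel"
      using hm by measurable
  qed (use b eq t in \<open>auto simp: indicator_def emeasure_lborel_Icc_eq\<close>)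
  have "m * t = (\<integral>s\<in>{0..t}. m \<partial>lborel)"
    using t by (simp add: set_integral_const)
  also have "\<dots> \<le> (\<integral>s\<in>{0..t}. V (q' s) \<partial>lborel)"
  proof (rule set_integral_mono[OF _ int])
    show "set_integrable lborel {0..t} (\<lambda>s. m)"
      using t by (simp add: set_integrable_def emeasure_lborel_Icc_eq)
    fix s assume "s \<in> {0..t}" then show "m \<le> V (q' s)"
      using m[of "q s"] inU eq by auto
  qed
  also have "\<dots> = (\<integral>s\<in>{0..t}. V (q s) \<partial>lborel)"
    using eq by (intro set_lebesgue_integral_cong) auto
  finally show ?thesis .
qed

theorem lemma3p7:
  fixes M :: "'w measure" and B :: "real \<Rightarrow> 'w \<Rightarrow> 'a::euclidean_space"
    and V :: "'a \<Rightarrow> real" and \<beta> \<kappa> \<beta>' C\<^sub>1 :: real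
  assumes BM: "brownian_motion M B"
    and V: "admissible_potential V"
    and \<beta>: "\<beta> > 0" and \<kappa>: "\<kappa> > 0"
    and \<beta>': "0 < \<beta>'" "\<beta>' < \<beta>" and C1: "C\<^sub>1 > 0"
    and Vlow: "\<And>x. 0 < norm x \<Longrightarrow> norm x \<le> 1 \<Longrightarrow>
                 V x \<ge> \<kappa> * norm x powr (-2 - 2 * \<beta>) - C\<^sub>1 * norm x powr (-2 - \<beta>')"
  shows "(\<forall>t R x y. t > 0 \<longrightarrow> 0 < R \<longrightarrow>
            R \<le> min ((\<kappa> / (4 * C\<^sub>1)) powr (1 / (2 * \<beta> - \<beta>'))) 1 \<longrightarrow>
            x \<noteq> 0 \<longrightarrow> y \<noteq> 0 \<longrightarrow> max (norm x) (norm y) < R \<longrightarrow>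
            Limsup (at_right 0)
              (\<lambda>\<delta>. ereal (killed_prob M B V t x (ball y \<delta>) (ball 0 R)
                           / measure lebesgue (ball (0::'a) \<delta>)))
            \<le> ereal ((4 * pi * t) powr (- real DIM('a) / 2)
                     * exp (- (norm (x - y))\<^sup>2 / (4 * t) - 3 * \<kappa> * t / (4 * R powr (2 + 2 * \<beta>)))))
       \<and> (\<forall>t R. t > 0 \<longrightarrow> 0 < R \<longrightarrow>
            R \<le> min ((\<kappa> / (4 * C\<^sub>1)) powr (1 / (2 * \<beta> - \<beta>'))) 1 \<longrightarrow>
            (\<forall>x\<in>ball 0 R - {0}. killed_prob M B V t x UNIV (ball 0 R)
                \<le> exp (- 3 * \<kappa> * t / (4 * R powr (2 + 2 * \<beta>)))))"
proof -
  have P: "prob_space M" using BM unfolding brownian_motion_def by auto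
  have Bm: "\<And>t. B t \<in> borel_measurable M" using BM unfolding brownian_motion_def by auto
  have B0: "\<And>\<omega>. \<omega> \<in> space M \<Longrightarrow> B 0 \<omega> = 0" using BM unfolding brownian_motion_def by auto
  have Bc: "\<And>\<omega>. \<omega> \<in> space M \<Longrightarrow> continuous_on {0..} (\<lambda>t. B t \<omega>)"
    using BM unfolding brownian_motion_def by auto
  have Bd: "\<And>t. 0 < t \<Longrightarrow> distributed M lborel (\<lambda>\<omega>. B t \<omega> - B 0 \<omega>) (\<lambda>z. ennreal (heat_kernel t z))"
  proof -
    fix t :: real assume "0 < t"
    have "\<forall>s t. 0 \<le> s \<and> s < t \<longrightarrow>
        distributed M lborel (\<lambda>\<omega>. B t \<omega> - B s \<omega>) (\<lambda>z. ennreal (heat_kernel (t - s) z))"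
      using BM unfolding brownian_motion_def by blast
    then show "distributed M lborel (\<lambda>\<omega>. B t \<omega> - B 0 \<omega>) (\<lambda>z. ennreal (heat_kernel t z))"
      using \<open>0 < t\<close> by (metis diff_zero order_refl)
  qed
  have key: "exp (- (\<integral>s\<in>{0..t}. V (x + B s \<omega>) \<partial>lborel)) \<le> exp (- (3 * \<kappa> * t / (4 * R powr (2 + 2 * \<beta>))))"
    if t: "t > 0" and R: "0 < R" "R \<le> min ((\<kappa> / (4 * C\<^sub>1)) powr (1 / (2 * \<beta> - \<beta>'))) 1"
      and \<omega>: "\<omega> \<in> space M" and path: "\<forall>s\<in>{0..t}. x + B s \<omega> \<in> ball 0 R - {0}" for t R x \<omega>
  proof -
    have "3 * \<kappa> / (4 * R powr (2 + 2 * \<beta>)) * t \<le> (\<integral>s\<in>{0..t}. V (x + B s \<omega>) \<partial>lborel)"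
    proof (rule path_integral_lower[OF V _ t path])
      show "continuous_on {0..} (\<lambda>s. x + B s \<omega>)"
        using Bc[OF \<omega>] by (intro continuous_intros)
      fix z :: 'a assume "z \<in> ball 0 R - {0}"
      then show "3 * \<kappa> / (4 * R powr (2 + 2 * \<beta>)) \<le> V z"
        by (intro V_lower[OF \<beta> \<kappa> \<beta>' C1 Vlow R]) auto
    qed
    then show ?thesis by simp
  qed
  show ?thesis
  proof (intro conjI allI impI ballI)
    fix t R :: real and x :: 'a
    assume t: "t > 0" and R: "0 < R" "R \<le> min ((\<kappa> / (4 * C\<^sub>1)) powr (1 / (2 * \<beta> - \<beta>'))) 1"
      and x: "x \<in> ball 0 R - {0}"
    let ?c = "3 * \<kappa> * t / (4 * R powr (2 + 2 * \<beta>))"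
    let ?f = "\<lambda>\<omega>. (if (\<forall>s\<in>{0..t}. x + B s \<omega> \<in> ball 0 R - {0}) \<and> x + B t \<omega> \<in> UNIV
            then exp (- (\<integral>s\<in>{0..t}. V (x + B s \<omega>) \<partial>lborel)) else 0)"
    have fle: "?f \<omega> \<le> exp (- ?c)" if "\<omega> \<in> space M" for \<omega>
      using key[OF t R that] by auto
    have "integral\<^sup>L M ?f \<le> exp (- ?c)"
    proof (cases "integrable M ?f")
      case True
      have "integral\<^sup>L M ?f \<le> integral\<^sup>L M (\<lambda>_. exp (- ?c))"
        using True fle P by (intro integral_mono) (auto simp: prob_space.finite_measure finite_measure.integrable_const)
      also have "\<dots> = exp (- ?c)" using P by (simp add: prob_space.prob_space)
      finally show ?thesis .
    qed (simp add: not_integrable_integral_eq)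
    then show "killed_prob M B V t x UNIV (ball 0 R) \<le> exp (- 3 * \<kappa> * t / (4 * R powr (2 + 2 * \<beta>)))"
      unfolding killed_prob_def by simp
  next
    fix t R :: real and x y :: 'a
    assume t: "t > 0" and R: "0 < R" "R \<le> min ((\<kappa> / (4 * C\<^sub>1)) powr (1 / (2 * \<beta> - \<beta>'))) 1"
    let ?c = "3 * \<kappa> * t / (4 * R powr (2 + 2 * \<beta>))"
    let ?hk = "heat_kernel t (y - x)"
    have hkc: "isCont (heat_kernel t) (y - x)"
      unfolding heat_kernel_def[abs_def] using t by (intro continuous_intros) auto
    have tgt: "(4 * pi * t) powr (- real DIM('a) / 2)
                     * exp (- (norm (x - y))\<^sup>2 / (4 * t) - 3 * \<kappa> * t / (4 * R powr (2 + 2 * \<beta>)))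
              = exp (- ?c) * ?hk"
    proof -
      have e1: "exp (- (norm (x - y))\<^sup>2 / (4 * t) - ?c) = exp (- ?c) * exp (- (norm (x - y))\<^sup>2 / (4 * t))"
        using exp_add[of "- ?c" "- (norm (x - y))\<^sup>2 / (4 * t)"] by (simp add: algebra_simps)
      show ?thesis unfolding heat_kernel_def e1 by (simp add: norm_minus_commute)
    qed
    have bound: "\<forall>\<^sub>F \<delta> in at_right 0. killed_prob M B V t x (ball y \<delta>) (ball 0 R)
                           / measure lebesgue (ball (0::'a) \<delta>) \<le> exp (- ?c) * (?hk + e)"
      if e: "e > 0" for e
    proof -
      obtain d where d: "d > 0" "\<And>z. dist z (y - x) < d \<Longrightarrow> dist (heat_kernel t z) ?hk < e"
        using hkc e unfolding continuous_at_eps_delta by blast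
      show ?thesis unfolding eventually_at_right_field
      proof (intro exI[of _ d] conjI allI impI)
        fix \<delta> :: real assume \<delta>: "0 < \<delta>" "\<delta> < d"
        let ?A = "ball (y - x) \<delta>"
        let ?S = "{\<omega> \<in> space M. x + B t \<omega> \<in> ball y \<delta>}"
        let ?f = "\<lambda>\<omega>. (if (\<forall>s\<in>{0..t}. x + B s \<omega> \<in> ball 0 R - {0}) \<and> x + B t \<omega> \<in> ball y \<delta>
            then exp (- (\<integral>s\<in>{0..t}. V (x + B s \<omega>) \<partial>lborel)) else 0)"
        have xBm: "(\<lambda>\<omega>. x + B t \<omega>) \<in> borel_measurable M"
          using Bm[of t] by (intro borel_measurable_add) auto
        have "?S = (\<lambda>\<omega>. x + B t \<omega>) -` ball y \<delta> \<inter> space M" by auto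
        then have Sm: "?S \<in> sets M" using measurable_sets[OF xBm, of "ball y \<delta>"] by simp
        have fle: "?f \<omega> \<le> exp (- ?c) * indicator ?S \<omega>" if "\<omega> \<in> space M" for \<omega>
          using key[OF t R that] that by (auto simp: indicator_def)
        have ig: "integrable M (\<lambda>\<omega>. exp (- ?c) * indicator ?S \<omega>)"
          using Sm finite_measure.emeasure_finite[OF prob_space.finite_measure[OF P], of ?S]
          by (intro integrable_mult_right integrable_real_indicator) (auto simp: less_top)
        have kp: "killed_prob M B V t x (ball y \<delta>) (ball 0 R) \<le> exp (- ?c) * measure M ?S"
        proof (cases "integrable M ?f")
          case True
          have "integral\<^sup>L M ?f \<le> integral\<^sup>L M (\<lambda>\<omega>. exp (- ?c) * indicator ?S \<omega>)"
            using True ig fle by (intro integral_mono) auto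
          also have "\<dots> = exp (- ?c) * measure M ?S" using Sm by simp
          finally show ?thesis unfolding killed_prob_def .
        qed (simp add: killed_prob_def not_integrable_integral_eq)
        have SX: "?S = (\<lambda>\<omega>. B t \<omega> - B 0 \<omega>) -` ?A \<inter> space M"
          using B0 by (auto simp: dist_norm algebra_simps)
        have Ab: "emeasure lborel ?A = ennreal (measure lborel ?A)"
          by (intro emeasure_eq_ennreal_measure) (use emeasure_bounded_finite[of ?A] in auto)
        have hkA: "ennreal (heat_kernel t z) * indicator ?A z \<le> ennreal (?hk + e) * indicator ?A z" for z
        proof (cases "z \<in> ?A")
          case True
          then have "dist z (y - x) < d" using \<delta> by (simp add: dist_commute)
          then have "heat_kernel t z \<le> ?hk + e" using d(2)[of z] by (auto simp: dist_real_def)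
          then show ?thesis using True by (auto intro: ennreal_leI)
        qed simp
        have "emeasure M ?S = (\<integral>\<^sup>+z. ennreal (heat_kernel t z) * indicator ?A z \<partial>lborel)"
          unfolding SX by (rule distributed_emeasure[OF Bd[OF t]]) simp
        also have "\<dots> \<le> (\<integral>\<^sup>+z. ennreal (?hk + e) * indicator ?A z \<partial>lborel)"
          by (intro nn_integral_mono hkA)
        also have "\<dots> = ennreal (?hk + e) * emeasure lborel ?A"
          by (simp add: nn_integral_cmult_indicator)
        also have "\<dots> = ennreal ((?hk + e) * measure lborel ?A)"
        proof -
          have "0 \<le> ?hk" unfolding heat_kernel_def by simp
          then show ?thesis using Ab e by (simp add: ennreal_mult)
        qed
        finally have "emeasure M ?S \<le> ennreal ((?hk + e) * measure lborel ?A)" .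
        moreover have "emeasure M ?S = ennreal (measure M ?S)"
          using finite_measure.emeasure_eq_measure[OF prob_space.finite_measure[OF P]] by simp
        moreover have hk0: "?hk \<ge> 0" unfolding heat_kernel_def by simp
        ultimately have mS: "measure M ?S \<le> (?hk + e) * measure lborel ?A"
          using e by (simp add: ennreal_le_iff)
        have vol: "measure lebesgue (ball (0::'a) \<delta>) = measure lborel ?A"
          using \<delta> by (simp add: content_ball)
        have volp: "measure lborel ?A > 0" using \<delta> by simp
        have "killed_prob M B V t x (ball y \<delta>) (ball 0 R) \<le> exp (- ?c) * ((?hk + e) * measure lborel ?A)"
        proof -
          have "exp (- ?c) * measure M ?S \<le> exp (- ?c) * ((?hk + e) * measure lborel ?A)"
            using mS by (intro mult_left_mono) auto
          then show ?thesis using kp by linarith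
        qed
        then show "killed_prob M B V t x (ball y \<delta>) (ball 0 R)
                           / measure lebesgue (ball (0::'a) \<delta>) \<le> exp (- ?c) * (?hk + e)"
          unfolding vol using volp by (simp add: divide_le_eq)
      qed (use d in auto)
    qed
    show "Limsup (at_right 0)
              (\<lambda>\<delta>. ereal (killed_prob M B V t x (ball y \<delta>) (ball 0 R)
                           / measure lebesgue (ball (0::'a) \<delta>)))
            \<le> ereal ((4 * pi * t) powr (- real DIM('a) / 2)
                     * exp (- (norm (x - y))\<^sup>2 / (4 * t) - 3 * \<kappa> * t / (4 * R powr (2 + 2 * \<beta>))))"
      unfolding tgt
    proof (rule ereal_le_epsilon2)
      fix e :: real assume e: "e > 0"
      have e': "e / exp (- ?c) > 0" using e by simp
      have "Limsup (at_right 0)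
              (\<lambda>\<delta>. ereal (killed_prob M B V t x (ball y \<delta>) (ball 0 R)
                           / measure lebesgue (ball (0::'a) \<delta>))) \<le> ereal (exp (- ?c) * (?hk + e / exp (- ?c)))"
        by (rule Limsup_bounded) (use bound[OF e'] in \<open>auto elim!: eventually_mono\<close>)
      also have "exp (- ?c) * (?hk + e / exp (- ?c)) = exp (- ?c) * ?hk + e"
        by (simp add: field_simps)
      finally show "Limsup (at_right 0)
              (\<lambda>\<delta>. ereal (killed_prob M B V t x (ball y \<delta>) (ball 0 R)
                           / measure lebesgue (ball (0::'a) \<delta>))) \<le> ereal (exp (- ?c) * ?hk) + ereal e"
        by simp
    qed
  qed
qed

end
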